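(* Let $a<b$, $n\in\mathbb{N}$, and let $X_n=\{x_0,\dots,x_n\}$ with $a=x_0<x_1<\dots<x_n=b$. Let $S=\{s_1,\dots,s_m\}\subset(a,b)$ be such that $s_\ell\in(x_{\alpha_\ell},x_{\alpha_\ell+1})$ for integers $0<\alpha_1<\dots<\alpha_m<n-1$ satisfying $\alpha_\ell+1<\alpha_{\ell+1}$ for $\ell=1,\dots,m-1$. Define the intervals $$I_0=[x_0,x_{\alpha_1}],\qquad I_\ell=[x_{\alpha_\ell+1},x_{\alpha_{\ell+1}}]\ (\ell=1,\dots,m-1),\qquad I_m=[x_{\alpha_m+1},x_n],$$ let $h^{\min}=\min_{\ell=0,\dots,m}|I_\ell|$ (length), and let $$h^{\max}_{X_n}=\max\{\,x_{i+1}-x_i:\ 0\le i\le n-1,\ s_\ell\notin(x_i,x_{i+1})\ \text{for all }\ell=1,\dots,m\,\}.$$ For $r>0$ and $x\in[a,b]$ let $\mathcal{I}_{r,x}$ be the set of closed intervals $I\subset\bigcup_{\ell=0}^m I_\ell$ with $|I|=r$ and $x\in I$, and define $$r_0=\inf\Big\{r\in\mathbb{R}_+:\ r\le h^{\min}\ \text{and}\ \forall x\in\textstyle\bigcup_{\ell=0}^m I_\ell\ \exists I\in\mathcal{I}_{r,x}\ \text{with}\ \mathrm{card}(I\cap X_n)\ge 1\Big\}.$$ If $h^{\min}\ge h^{\max}_{X_n}$, then $r_0$ exists (the set over which the infimum is taken is nonempty) and $r_0\in\mathbb{R}_+$, i.e. $r_0>0$.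
   Context: $\mathbb{R}_+$ denotes the positive reals; $\mathrm{card}$ denotes cardinality and $|I|$ the length of an interval $I$. *)

theory Defs
  imports Complex_Main
begin

definition seg_lo :: "(nat \<Rightarrow> real) \<Rightarrow> (nat \<Rightarrow> nat) \<Rightarrow> nat \<Rightarrow> real" where
  "seg_lo x \<alpha> l = (if l = 0 then x 0 else x (\<alpha> l + 1))"

definition seg_hi :: "(nat \<Rightarrow> real) \<Rightarrow> (nat \<Rightarrow> nat) \<Rightarrow> nat \<Rightarrow> nat \<Rightarrow> nat \<Rightarrow> real" where
  "seg_hi x \<alpha> m n l = (if l = m then x n else x (\<alpha> (l + 1)))"

definition seg :: "(nat \<Rightarrow> real) \<Rightarrow> (nat \<Rightarrow> nat) \<Rightarrow> nat \<Rightarrow> nat \<Rightarrow> nat \<Rightarrow> real set" where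
  "seg x \<alpha> m n l = {seg_lo x \<alpha> l .. seg_hi x \<alpha> m n l}"

definition h_min :: "(nat \<Rightarrow> real) \<Rightarrow> (nat \<Rightarrow> nat) \<Rightarrow> nat \<Rightarrow> nat \<Rightarrow> real" where
  "h_min x \<alpha> m n = Min {seg_hi x \<alpha> m n l - seg_lo x \<alpha> l | l. l \<le> m}"

definition h_max :: "(nat \<Rightarrow> real) \<Rightarrow> (nat \<Rightarrow> real) \<Rightarrow> nat \<Rightarrow> nat \<Rightarrow> real" where
  "h_max x s m n = Max {x (i + 1) - x i | i. i < n \<and> (\<forall>l\<in>{1..m}. s l \<notin> {x i <..< x (i + 1)})}"

text \<open>The set whose infimum is r_0. A closed interval of length r is {c..c+r}.\<close>
definition r0_set :: "(nat \<Rightarrow> real) \<Rightarrow> (nat \<Rightarrow> nat) \<Rightarrow> nat \<Rightarrow> nat \<Rightarrow> real set" where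
  "r0_set x \<alpha> m n = {r. r > 0 \<and> r \<le> h_min x \<alpha> m n \<and>
     (\<forall>y \<in> (\<Union>l\<le>m. seg x \<alpha> m n l).
        \<exists>c. {c..c+r} \<subseteq> (\<Union>l\<le>m. seg x \<alpha> m n l) \<and> y \<in> {c..c+r} \<and>
            card ({c..c+r} \<inter> x ` {0..n}) \<ge> 1)}"

end

theory Submission
  imports Defs
begin

lemma node_near:
  fixes x :: "nat \<Rightarrow> real"
  assumes "\<And>j. p \<le> j \<Longrightarrow> j < p + d \<Longrightarrow> x (j+1) - x j \<le> H" "H \<ge> 0"
    "x p \<le> y" "y \<le> x (p + d)"
  shows "\<exists>j. p \<le> j \<and> j \<le> p + d \<and> y - H \<le> x j \<and> x j \<le> y"
  using assms
proof (induction d arbitrary: y)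
  case 0
  then show ?case by (intro exI[of _ p]) auto
next
  case (Suc d)
  show ?case
  proof (cases "y \<le> x (p + d)")
    case True
    with Suc show ?thesis by fastforce
  next
    case False
    have "x (Suc (p+d)) - x (p+d) \<le> H" using Suc.prems(1)[of "p+d"] by simp
    moreover have "y \<le> x (Suc (p+d))" using Suc.prems(4) by simp
    ultimately have "y - H \<le> x (p+d)" by linarith
    then show ?thesis using False Suc.prems by (intro exI[of _ "p+d"]) auto
  qed
qed

lemma strict_x:
  fixes x :: "nat \<Rightarrow> real"
  assumes "\<And>i. i < n \<Longrightarrow> x i < x (i + 1)"
  shows "i < j \<Longrightarrow> j \<le> n \<Longrightarrow> x i < x j"
proof (induction j)
  case 0 then show ?case by simp
next
  case (Suc j)
  show ?case
  proof (cases "i < j")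
    case True then show ?thesis using Suc assms[of j] by auto
  next
    case False then have "i = j" using Suc by auto
    then show ?thesis using Suc assms[of j] by auto
  qed
qed

lemma mono_x:
  fixes x :: "nat \<Rightarrow> real"
  assumes "\<And>i. i < n \<Longrightarrow> x i < x (i + 1)"
  shows "i \<le> j \<Longrightarrow> j \<le> n \<Longrightarrow> x i \<le> x j"
  using strict_x[where x=x and n=n, OF assms, of i j] by (cases "i = j") auto

lemma alpha_lt:
  fixes \<alpha> :: "nat \<Rightarrow> nat"
  assumes "\<And>l. 1 \<le> l \<Longrightarrow> l < m \<Longrightarrow> \<alpha> l + 1 < \<alpha> (l + 1)"
  shows "1 \<le> l \<Longrightarrow> l < l' \<Longrightarrow> l' \<le> m \<Longrightarrow> \<alpha> l + 1 < \<alpha> l'"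
proof (induction l')
  case 0 then show ?case by simp
next
  case (Suc l')
  show ?case
  proof (cases "l < l'")
    case True then show ?thesis using Suc assms[of l'] by auto
  next
    case False then have "l = l'" using Suc by auto
    then show ?thesis using Suc assms[of l'] by auto
  qed
qed

theorem theorem1:
  fixes a b :: real and n m :: nat and x s :: "nat \<Rightarrow> real" and \<alpha> :: "nat \<Rightarrow> nat"
  assumes "a < b"
    and "x 0 = a" and "x n = b"
    and "\<And>i. i < n \<Longrightarrow> x i < x (i + 1)"
    and "m \<ge> 1"
    and "0 < \<alpha> 1" and "\<alpha> m < n - 1"
    and "\<And>l. 1 \<le> l \<Longrightarrow> l < m \<Longrightarrow> \<alpha> l + 1 < \<alpha> (l + 1)"
    and "\<And>l. 1 \<le> l \<Longrightarrow> l \<le> m \<Longrightarrow> s l \<in> {x (\<alpha> l) <..< x (\<alpha> l + 1)}"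
    and "h_min x \<alpha> m n \<ge> h_max x s m n"
  shows "r0_set x \<alpha> m n \<noteq> {} \<and> Inf (r0_set x \<alpha> m n) > 0"
proof -
  note sx = strict_x[where x=x and n=n, OF assms(4)]
  note mx = mono_x[where x=x and n=n, OF assms(4)]
  have al: "\<alpha> l + 1 < \<alpha> l'" if "1 \<le> l" "l < l'" "l' \<le> m" for l l'
    using alpha_lt[where \<alpha>=\<alpha> and m=m, OF assms(8)] that by blast
  have ale: "\<alpha> l \<le> \<alpha> l'" if "1 \<le> l" "l \<le> l'" "l' \<le> m" for l l'
    using al[of l l'] that by (cases "l = l'") auto
  have a1: "1 \<le> \<alpha> l" "\<alpha> l + 1 < n" if "1 \<le> l" "l \<le> m" for l
    using ale[of 1 l] ale[of l m] that assms(6,7) by auto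
  define lo where "lo l = (if l = 0 then 0 else \<alpha> l + 1)" for l
  define hi where "hi l = (if l = m then n else \<alpha> (l + 1))" for l
  have slo: "seg_lo x \<alpha> l = x (lo l)" for l by (simp add: seg_lo_def lo_def)
  have shi: "seg_hi x \<alpha> m n l = x (hi l)" for l by (simp add: seg_hi_def hi_def)
  have hin: "hi l \<le> n" if "l \<le> m" for l
    using that a1[of "l+1"] by (auto simp: hi_def)
  have lohi: "lo l \<le> hi l" if "l \<le> m" for l
  proof (cases "l = 0")
    case True then show ?thesis by (simp add: lo_def)
  next
    case False
    then show ?thesis using that a1[of l] al[of l "l+1"] by (auto simp: lo_def hi_def)
  qed
  have gapS: "\<forall>l'\<in>{1..m}. s l' \<notin> {x j <..< x (j + 1)}"
    if "l \<le> m" "lo l \<le> j" "j < hi l" for l j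
  proof
    fix l' assume l': "l' \<in> {1..m}"
    have jn: "j + 1 \<le> n" using that hin[of l] by simp
    have ne: "j \<noteq> \<alpha> l'"
    proof (cases "l' \<le> l")
      case True
      then have "l \<noteq> 0" using l' by auto
      then have "\<alpha> l + 1 \<le> j" using that by (simp add: lo_def)
      then show ?thesis using True ale[of l' l] l' that by auto
    next
      case False
      then have "l \<noteq> m" and hieq: "hi l = \<alpha> (l+1)" using l' by (auto simp: hi_def)
      then have "\<alpha> (l+1) \<le> \<alpha> l'" using ale[of "l+1" l'] False l' that by auto
      then show ?thesis using that hieq by auto
    qed
    have sl: "x (\<alpha> l') < s l'" "s l' < x (\<alpha> l' + 1)" using assms(9)[of l'] l' by auto
    have an: "\<alpha> l' + 1 < n" using a1[of l'] l' by auto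
    show "s l' \<notin> {x j <..< x (j + 1)}"
    proof (cases "j < \<alpha> l'")
      case True
      then have "x (j+1) \<le> x (\<alpha> l')" using mx[of "j+1" "\<alpha> l'"] an by auto
      then show ?thesis using sl by auto
    next
      case False
      then have "x (\<alpha> l' + 1) \<le> x j" using mx[of "\<alpha> l' + 1" j] ne jn by auto
      then show ?thesis using sl by auto
    qed
  qed
  have finmax: "finite {x (i + 1) - x i | i. i < n \<and> (\<forall>l\<in>{1..m}. s l \<notin> {x i <..< x (i + 1)})}"
    by (rule finite_subset[of _ "(\<lambda>i. x (i+1) - x i) ` {..<n}"]) auto
  have gap: "x (j+1) - x j \<le> h_max x s m n" if "l \<le> m" "lo l \<le> j" "j < hi l" for l j
    unfolding h_max_def
    apply (rule Max_ge[OF finmax])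
    using gapS[OF that] that hin[of l] by auto
  have finmin: "finite {seg_hi x \<alpha> m n l - seg_lo x \<alpha> l | l. l \<le> m}"
    by (rule finite_subset[of _ "(\<lambda>l. seg_hi x \<alpha> m n l - seg_lo x \<alpha> l) ` {..m}"]) auto
  have hmin: "h_min x \<alpha> m n \<le> x (hi l) - x (lo l)" if "l \<le> m" for l
    unfolding h_min_def slo[symmetric] shi[symmetric]
    by (rule Min_le[OF finmin]) (use that in auto)
  have n1: "1 < n" using assms(6,7) ale[of 1 m] assms(5) by auto
  have g0: "x 1 - x 0 \<le> h_max x s m n"
  proof -
    have "0 < hi 0" using assms(5,6) by (auto simp: hi_def)
    then show ?thesis using gap[of 0 0] by (simp add: lo_def)
  qed
  have x01: "x 0 < x 1" using assms(4)[of 0] n1 by simp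
  define H where "H = h_min x \<alpha> m n"
  have Hpos: "H > 0" using g0 assms(10) x01 unfolding H_def by linarith
  define U where "U = (\<Union>l\<le>m. seg x \<alpha> m n l)"
  have mem: "H \<in> r0_set x \<alpha> m n"
    unfolding r0_set_def U_def[symmetric] H_def[symmetric]
  proof (intro CollectI conjI ballI)
    show "0 < H" by fact
    show "H \<le> H" by simp
    fix y assume "y \<in> U"
    then obtain l where l: "l \<le> m" "y \<in> seg x \<alpha> m n l" unfolding U_def by auto
    have y: "x (lo l) \<le> y" "y \<le> x (hi l)" using l by (auto simp: seg_def slo shi)
    have Hl: "H \<le> x (hi l) - x (lo l)" using hmin[OF l(1)] H_def by simp
    have sub: "{c..c+H} \<subseteq> U" if "x (lo l) \<le> c" "c + H \<le> x (hi l)" for c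
      using that l(1) unfolding U_def seg_def slo shi by fastforce
    have card1: "card ({c..c+H} \<inter> x ` {0..n}) \<ge> 1" if "k \<le> n" "x k \<in> {c..c+H}" for c k
    proof -
      have "finite ({c..c+H} \<inter> x ` {0..n})" by simp
      moreover have "x k \<in> {c..c+H} \<inter> x ` {0..n}" using that by auto
      ultimately show ?thesis by (metis One_nat_def Suc_leI card_gt_0_iff empty_iff)
    qed
    show "\<exists>c. {c..c + H} \<subseteq> U \<and> y \<in> {c..c + H} \<and> 1 \<le> card ({c..c + H} \<inter> x ` {0..n})"
    proof (cases "y \<le> x (lo l) + H")
      case True
      show ?thesis
        apply (rule exI[of _ "x (lo l)"])
        using True y Hl sub[of "x (lo l)"] card1[of "lo l" "x (lo l)"] lohi[OF l(1)] hin[OF l(1)] Hpos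
        by auto
    next
      case False
      obtain d where d: "hi l = lo l + d" using lohi[OF l(1)] le_Suc_ex by blast
      have "\<exists>j. lo l \<le> j \<and> j \<le> lo l + d \<and> y - H \<le> x j \<and> x j \<le> y"
        apply (rule node_near)
        using gap[OF l(1)] assms(10) y d Hpos unfolding H_def by (auto, fastforce)
      then obtain j where j: "lo l \<le> j" "j \<le> hi l" "y - H \<le> x j" "x j \<le> y" using d by auto
      show ?thesis
        apply (rule exI[of _ "y - H"])
        using False y sub[of "y - H"] card1[of j "y - H"] j hin[OF l(1)] Hpos
        by auto
    qed
  qed
  have lb: "(x 1 - x 0) / 2 \<le> r" if "r \<in> r0_set x \<alpha> m n" for r
  proof (rule ccontr)
    assume "\<not> ?thesis"
    then have r: "r < (x 1 - x 0) / 2" by simp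
    define y where "y = (x 0 + x 1) / 2"
    have "x 1 \<le> x (\<alpha> 1)" using mx[of 1 "\<alpha> 1"] assms(6) a1[of 1] assms(5) by auto
    then have "y \<in> seg x \<alpha> m n 0"
      using x01 assms(5) by (auto simp: seg_def seg_lo_def seg_hi_def y_def)
    then have "y \<in> U" unfolding U_def by auto
    with that obtain c where c: "y \<in> {c..c+r}" "card ({c..c+r} \<inter> x ` {0..n}) \<ge> 1"
      unfolding r0_set_def U_def by blast
    then have "{c..c+r} \<inter> x ` {0..n} \<noteq> {}" by (metis card.empty not_one_le_zero)
    then obtain k where k: "k \<le> n" "x k \<in> {c..c+r}" by force
    show False
    proof (cases "k = 0")
      case True then show ?thesis using k c r y_def by auto
    next
      case False
      then have "x 1 \<le> x k" using mx[of 1 k] k by auto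
      then show ?thesis using k c r y_def by auto
    qed
  qed
  have ne: "r0_set x \<alpha> m n \<noteq> {}" using mem by auto
  have "(x 1 - x 0) / 2 \<le> Inf (r0_set x \<alpha> m n)"
    by (rule cInf_greatest[OF ne lb])
  moreover have "0 < (x 1 - x 0) / 2" using x01 by simp
  ultimately show ?thesis using ne by linarith
qed

end
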